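(* For every integer $k\geq1$ and every polynomial $r(x)$, the function $$H(x,y)=\frac{\big[(1-r(x)^2)^{2k}+2k\,r(x)(1-r(x)^2)^k y+k y^2\big]^{2k-1}}{\big[(1-r(x)^2)^{2k-1}+(2k-1)\,r(x)(1-r(x)^2)^{k-1}y+\tfrac{2k-1}{2}y^2\big]^{2k}}$$ is a first integral of a Li\'enard type equation of the form $$\frac{dx}{dt}=-y+r_2(x),\qquad \frac{dy}{dt}=y\,r_4(x)$$ for suitable polynomials $r_2,r_4$. *)

theory Defs
  imports "HOL-Analysis.Analysis" "HOL-Computational_Algebra.Polynomial"
begin

definition first_integral ::
  "(real \<times> real \<Rightarrow> real \<times> real) \<Rightarrow> (real \<times> real) set \<Rightarrow> (real \<times> real \<Rightarrow> real) \<Rightarrow> bool" where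
  "first_integral F U H \<longleftrightarrow>
     open U \<and> U \<noteq> {} \<and> H differentiable_on U \<and>
     (\<forall>V. open V \<and> V \<noteq> {} \<and> V \<subseteq> U \<longrightarrow> \<not> (\<exists>c. \<forall>z\<in>V. H z = c)) \<and>
     (\<forall>(\<gamma> :: real \<Rightarrow> real \<times> real) I.
        is_interval I \<and> (\<forall>t\<in>I. \<gamma> t \<in> U \<and> (\<gamma> has_vector_derivative F (\<gamma> t)) (at t within I))
        \<longrightarrow> (\<forall>s\<in>I. \<forall>t\<in>I. H (\<gamma> s) = H (\<gamma> t)))"

definition Hnum :: "nat \<Rightarrow> real poly \<Rightarrow> real \<Rightarrow> real \<Rightarrow> real" where
  "Hnum k r x y = (1 - (poly r x)^2)^(2*k) + 2 * real k * poly r x * (1 - (poly r x)^2)^k * y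
                  + real k * y^2"

definition Hden :: "nat \<Rightarrow> real poly \<Rightarrow> real \<Rightarrow> real \<Rightarrow> real" where
  "Hden k r x y = (1 - (poly r x)^2)^(2*k-1) + (2 * real k - 1) * poly r x * (1 - (poly r x)^2)^(k-1) * y
                  + (2 * real k - 1) / 2 * y^2"

end

theory Submission
  imports Defs
begin

lemma pow_facts:
  fixes A :: real assumes k: "k \<ge> 1"
  shows "A^(2*k-1) = A*(A^(k-1))^2" "A^k = A*A^(k-1)" "A^(2*k) = A^2*(A^(k-1))^2"
    "A * ((real k - 1) * A^(k-2)) = (real k - 1) * A^(k-1)"
proof -
  obtain j where j: "k = Suc j" using k by (cases k) auto
  show "A^(2*k-1) = A*(A^(k-1))^2" "A^k = A*A^(k-1)" "A^(2*k) = A^2*(A^(k-1))^2"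
    unfolding j by (simp_all add: power2_eq_square power_add mult_2 mult_2_right algebra_simps)
  show "A * ((real k - 1) * A^(k-2)) = (real k - 1) * A^(k-1)"
  proof (cases j)
    case 0 then show ?thesis using j by simp
  next
    case (Suc i) then show ?thesis using j by simp
  qed
qed

lemma dN0:
  fixes X Y :: "real \<Rightarrow> real" and r :: "real poly"
  assumes dX: "(X has_real_derivative Xd) (at t within I)"
      and dY: "(Y has_real_derivative Yd) (at t within I)"
  shows "((\<lambda>s. Hnum k r (X s) (Y s)) has_real_derivative
      (let R = poly r (X t); Rd = Xd * poly (pderiv r) (X t); A = 1 - R^2; Ad = -(2*R*Rd) in
       real(2*k) * A^(2*k-1) * Ad + 2*real k*((Rd*A^k + R*(real k*A^(k-1)*Ad))*Y t + R*A^k*Yd) + real k*(2*Y t*Yd))) (at t within I)"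
  unfolding Hnum_def Let_def
  apply (rule derivative_eq_intros has_field_derivative_poly dX dY refl)+
  apply (simp add: algebra_simps)
  done

lemma dD0:
  fixes X Y :: "real \<Rightarrow> real" and r :: "real poly"
  assumes k: "k \<ge> 1"
  assumes dX: "(X has_real_derivative Xd) (at t within I)"
      and dY: "(Y has_real_derivative Yd) (at t within I)"
  shows "((\<lambda>s. Hden k r (X s) (Y s)) has_real_derivative
      (let R = poly r (X t); Rd = Xd * poly (pderiv r) (X t); A = 1 - R^2; Ad = -(2*R*Rd) in
       (2*real k - 1) * (A^(k-1))^2 * Ad + (2*real k - 1)*((Rd*A^(k-1) + R*((real k - 1)*A^(k-2)*Ad))*Y t + R*A^(k-1)*Yd)
         + (2*real k - 1)/2*(2*Y t*Yd))) (at t within I)"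
proof -
  obtain j where j: "k = Suc j" using k by (cases k) auto
  have e: "(A::real)^(2*k-1-1) = (A^(k-1))^2" for A
    unfolding j by (simp add: power2_eq_square power_add mult_2 mult_2_right)
  have e2: "(A::real)^(k - Suc (Suc 0)) = A^(k-2)" for A by (simp add: numeral_2_eq_2)
  show ?thesis
  unfolding Hden_def Let_def
  apply (rule derivative_eq_intros has_field_derivative_poly dX dY refl)+
  using k e by (simp add: algebra_simps of_nat_diff e2)
qed

definition r2p :: "nat \<Rightarrow> real poly \<Rightarrow> real poly" where
  "r2p k r = (1 - r^2)^(k-1) * r * (smult (2*real k+1) (r^2) - 3)"
definition r4p :: "nat \<Rightarrow> real poly \<Rightarrow> real poly" where
  "r4p k r = pderiv r * ((1 - r^2)^(k-1) * ((1 - r^2) + smult (4*(real k)^2) (r^2))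
      - smult (4*real k) (r^2 * smult (real k - 1) ((1 - r^2)^(k-2))))"

lemma algN:
  fixes R Rp Y S T K A Yd :: real
  assumes "A = 1 - R^2" "A * T = (K - 1) * S"
  shows "let Xd = - Y + S*R*((2*K+1)*R^2-3); Yd = Y * (Rp*(S*(A+4*K^2*R^2)-4*K*(R^2*T)));
      Rd = Xd * Rp; Ad = -(2*R*Rd) in
    2*K*(A*S^2)*Ad + 2*K*((Rd*(A*S) + R*(K*S*Ad))*Y + R*(A*S)*Yd) + K*(2*Y*Yd)
   = 2*K*(Rp*R^2*((4*K+2)*S-4*T))*(A^2*S^2 + 2*K*R*(A*S)*Y + K*Y^2)"
  unfolding Let_def using assms by algebra

lemma algD:
  fixes R Rp Y S T K A :: real
  assumes "A = 1 - R^2" "A * T = (K - 1) * S"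
  shows "let Xd = - Y + S*R*((2*K+1)*R^2-3); Yd = Y * (Rp*(S*(A+4*K^2*R^2)-4*K*(R^2*T)));
      Rd = Xd * Rp; Ad = -(2*R*Rd) in
    (2*K - 1) * S^2 * Ad + (2*K - 1)*((Rd*S + R*(T*Ad))*Y + R*S*Yd) + (2*K - 1)/2*(2*Y*Yd)
   = (2*K-1)*(Rp*R^2*((4*K+2)*S-4*T))*(A*S^2 + (2*K-1)*R*S*Y + (2*K-1)/2*Y^2)"
  unfolding Let_def using assms by algebra

lemma dH:
  fixes X Y :: "real \<Rightarrow> real" and r :: "real poly"
  assumes k: "k \<ge> 1"
  assumes dX: "(X has_real_derivative (- Y t + poly (r2p k r) (X t))) (at t within I)"
      and dY: "(Y has_real_derivative (Y t * poly (r4p k r) (X t))) (at t within I)"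
      and nz: "Hden k r (X t) (Y t) \<noteq> 0"
  shows "((\<lambda>s. Hnum k r (X s) (Y s) ^ (2*k-1) / Hden k r (X s) (Y s) ^ (2*k)) has_real_derivative 0) (at t within I)"
proof -
  define R where "R = poly r (X t)"
  define Rp where "Rp = poly (pderiv r) (X t)"
  define A where "A = 1 - R^2"
  define S where "S = A^(k-1)"
  define T where "T = (real k - 1) * A^(k-2)"
  define K where "K = real k"
  define m where "m = Rp*R^2*((4*K+2)*S-4*T)"
  have hT2: "(K - 1) * A^(k-2) = T" by (simp add: T_def K_def)
  have hA: "A = 1 - R^2" by (simp add: A_def)
  have hT: "A * T = (K - 1) * S" unfolding T_def S_def K_def using pow_facts(4)[OF k] .
  have p2: "poly (r2p k r) (X t) = S*R*((2*K+1)*R^2-3)"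
    by (simp add: r2p_def S_def A_def R_def K_def)
  have p4: "poly (r4p k r) (X t) = Rp*(S*(A+4*K^2*R^2)-4*K*(R^2*T))"
    by (simp add: r4p_def S_def A_def R_def K_def Rp_def T_def)
  have N1: "((\<lambda>s. Hnum k r (X s) (Y s)) has_real_derivative 2*K*m*Hnum k r (X t) (Y t)) (at t within I)"
  proof -
    have "((\<lambda>s. Hnum k r (X s) (Y s)) has_real_derivative
      (let Xd = - Y t + S*R*((2*K+1)*R^2-3); Yd = Y t * (Rp*(S*(A+4*K^2*R^2)-4*K*(R^2*T)));
      Rd = Xd * Rp; Ad = -(2*R*Rd) in
       2*K*(A*S^2)*Ad + 2*K*((Rd*(A*S) + R*(K*S*Ad))*Y t + R*(A*S)*Yd) + K*(2*Y t*Yd))) (at t within I)" (is "(_ has_real_derivative ?E) _")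
      using dN0[OF dX dY, of k r] unfolding p2 p4 Let_def
      unfolding R_def[symmetric] Rp_def[symmetric] A_def[symmetric] K_def[symmetric]
        pow_facts(1,2)[OF k] S_def[symmetric] of_nat_mult of_nat_numeral
      by (simp add: algebra_simps)
    moreover have "?E = 2*K*(Rp*R^2*((4*K+2)*S-4*T))*(A^2*S^2 + 2*K*R*(A*S)*Y t + K*(Y t)^2)"
      unfolding Let_def using hA hT by algebra
    moreover have "Hnum k r (X t) (Y t) = A^2*S^2 + 2*K*R*(A*S)*Y t + K*(Y t)^2"
      unfolding Hnum_def R_def[symmetric] A_def[symmetric] K_def[symmetric] S_def
        pow_facts(2,3)[OF k] by simp
    ultimately show ?thesis unfolding m_def by metis
  qed
  have D1: "((\<lambda>s. Hden k r (X s) (Y s)) has_real_derivative (2*K-1)*m*Hden k r (X t) (Y t)) (at t within I)"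
  proof -
    have "((\<lambda>s. Hden k r (X s) (Y s)) has_real_derivative
      (let Xd = - Y t + S*R*((2*K+1)*R^2-3); Yd = Y t * (Rp*(S*(A+4*K^2*R^2)-4*K*(R^2*T)));
      Rd = Xd * Rp; Ad = -(2*R*Rd) in
       (2*K - 1) * S^2 * Ad + (2*K - 1)*((Rd*S + R*(T*Ad))*Y t + R*S*Yd) + (2*K - 1)/2*(2*Y t*Yd))) (at t within I)" (is "(_ has_real_derivative ?E) _")
      using dD0[OF k dX dY, of r] unfolding p2 p4 Let_def
      unfolding R_def[symmetric] Rp_def[symmetric] A_def[symmetric] K_def[symmetric]
        S_def[symmetric] hT2
      by (simp add: algebra_simps)
    moreover have "?E = (2*K-1)*(Rp*R^2*((4*K+2)*S-4*T))*(A*S^2 + (2*K-1)*R*S*Y t + (2*K-1)/2*(Y t)^2)"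
      unfolding Let_def using hA hT by algebra
    moreover have "Hden k r (X t) (Y t) = A*S^2 + (2*K-1)*R*S*Y t + (2*K-1)/2*(Y t)^2"
      unfolding Hden_def R_def[symmetric] A_def[symmetric] K_def[symmetric] S_def
        pow_facts(1)[OF k] by simp
    ultimately show ?thesis unfolding m_def by metis
  qed
  have nz2: "Hden k r (X t) (Y t) ^ (2*k) \<noteq> 0" using nz by simp
  note Q = DERIV_quotient[OF DERIV_power[OF N1, of "2*k-1"] DERIV_power[OF D1, of "2*k"] nz2]
  obtain j where j: "k = Suc j" using k by (cases k) auto
  have Z: "of_nat (2*k-1) * (2*K*m*Hnum k r (X t) (Y t) * Hnum k r (X t) (Y t)^(2*k-1 - Suc 0)) * Hden k r (X t) (Y t) ^ (2*k)
     - of_nat (2*k) * ((2*K-1)*m*Hden k r (X t) (Y t) * Hden k r (X t) (Y t)^(2*k - Suc 0)) * Hnum k r (X t) (Y t) ^ (2*k-1) = 0"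
    unfolding K_def j by (simp add: algebra_simps)
  show ?thesis using Q unfolding Z by simp
qed

lemma vd_fst: "(g has_vector_derivative v) F \<Longrightarrow> ((\<lambda>t. fst (g t)) has_real_derivative fst v) F"
proof -
  assume "(g has_vector_derivative v) F"
  then have "((\<lambda>t. fst (g t)) has_derivative (\<lambda>h. fst (h *\<^sub>R v))) F"
    unfolding has_vector_derivative_def by (rule has_derivative_fst)
  moreover have "(\<lambda>h. fst (h *\<^sub>R v)) = (*) (fst v)" by (auto simp: mult.commute)
  ultimately show ?thesis unfolding has_field_derivative_def by simp
qed

lemma vd_snd: "(g has_vector_derivative v) F \<Longrightarrow> ((\<lambda>t. snd (g t)) has_real_derivative snd v) F"
proof -
  assume "(g has_vector_derivative v) F"
  then have "((\<lambda>t. snd (g t)) has_derivative (\<lambda>h. snd (h *\<^sub>R v))) F"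
    unfolding has_vector_derivative_def by (rule has_derivative_snd)
  moreover have "(\<lambda>h. snd (h *\<^sub>R v)) = (*) (snd v)" by (auto simp: mult.commute)
  ultimately show ?thesis unfolding has_field_derivative_def by simp
qed

lemma dpoly_fst: "(\<lambda>z::real\<times>real. poly p (fst z)) differentiable (at z within S)"
proof (rule differentiable_compose[where f="poly p" and g=fst])
  show "poly p differentiable at (fst z)" using poly_differentiable[of p "fst z"] by simp
  show "fst differentiable at z within S"
    unfolding differentiable_def using has_derivative_fst[OF has_derivative_ident] by blast
qed

lemma dsnd: "(\<lambda>z::real\<times>real. snd z) differentiable (at z within S)"
  unfolding differentiable_def using has_derivative_snd[OF has_derivative_ident] by blast

lemma poly_nz_interval:
  fixes p :: "real poly" assumes "p \<noteq> 0" "a < b"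
  shows "\<exists>y. a < y \<and> y < b \<and> poly p y \<noteq> 0"
proof (rule ccontr)
  assume "\<not> ?thesis"
  then have "{a<..<b} \<subseteq> {y. poly p y = 0}" by auto
  moreover have "finite {y. poly p y = 0}" using poly_roots_finite[OF assms(1)] .
  ultimately have "finite {a<..<b}" by (rule finite_subset)
  then show False using infinite_Ioo[OF assms(2)] by simp
qed

lemma Hden_poly: "Hden k r x y = poly [:(1 - (poly r x)^2)^(2*k-1), (2 * real k - 1) * poly r x * (1 - (poly r x)^2)^(k-1), (2 * real k - 1) / 2:] y"
  unfolding Hden_def by (simp add: algebra_simps power2_eq_square)

lemma Hnum_poly: "Hnum k r x y = poly [:(1 - (poly r x)^2)^(2*k), 2 * real k * poly r x * (1 - (poly r x)^2)^k, real k:] y"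
  unfolding Hnum_def by (simp add: algebra_simps power2_eq_square)

theorem mainTheorem8:
  fixes k :: nat and r :: "real poly"
  assumes "k \<ge> 1"
  shows "\<exists>r2 r4 :: real poly.
           first_integral (\<lambda>(x, y). (- y + poly r2 x, y * poly r4 x))
             {(x, y). Hden k r x y \<noteq> 0}
             (\<lambda>(x, y). (Hnum k r x y) ^ (2*k - 1) / (Hden k r x y) ^ (2*k))"
proof (intro exI)
  have k: "k \<ge> 1" by fact
  define U where "U = {(x, y). Hden k r x y \<noteq> 0}"
  define H where "H = (\<lambda>(x, y). (Hnum k r x y) ^ (2*k - 1) / (Hden k r x y) ^ (2*k))"
  have Ueq: "U = {z. Hden k r (fst z) (snd z) \<noteq> 0}" unfolding U_def by auto
  have Heq: "H = (\<lambda>z. (Hnum k r (fst z) (snd z)) ^ (2*k - 1) / (Hden k r (fst z) (snd z)) ^ (2*k))"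
    unfolding H_def by (simp add: case_prod_unfold)
  define qD where "qD x = [:(1 - (poly r x)^2)^(2*k-1), (2 * real k - 1) * poly r x * (1 - (poly r x)^2)^(k-1), (2 * real k - 1) / 2:]" for x
  define qN where "qN x = [:(1 - (poly r x)^2)^(2*k), 2 * real k * poly r x * (1 - (poly r x)^2)^k, real k:]" for x
  have kK: "real k \<noteq> 0" "(2 * real k - 1) / 2 \<noteq> 0" using k by auto
  have qD0: "qD x \<noteq> 0" and dqD: "degree (qD x) = 2" for x unfolding qD_def using kK by auto
  have qN0: "qN x \<noteq> 0" and dqN: "degree (qN x) = 2" for x unfolding qN_def using kK by auto
  have openU: "open U" unfolding Ueq Hden_def
    by (intro open_Collect_neq continuous_intros)
  have neU: "U \<noteq> {}"
  proof -
    obtain y where "poly (qD 0) y \<noteq> 0" using poly_nz_interval[OF qD0, of 0 1] by auto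
    then have "(0, y) \<in> U" unfolding U_def qD_def by (simp add: Hden_poly)
    then show ?thesis by auto
  qed
  have diffH: "H differentiable_on U"
    unfolding differentiable_on_def Heq
  proof
    fix z assume "z \<in> U"
    then have nz: "Hden k r (fst z) (snd z) \<noteq> 0" unfolding Ueq by auto
    show "(\<lambda>z. Hnum k r (fst z) (snd z) ^ (2 * k - 1) / Hden k r (fst z) (snd z) ^ (2 * k)) differentiable at z within U"
      apply (rule differentiable_divide)
      unfolding Hnum_def Hden_def
        apply (intro differentiable_power differentiable_add differentiable_mult differentiable_diff differentiable_const dpoly_fst dsnd)+
      using nz unfolding Hden_def by simp
  qed
  have nonconst: "\<not> (\<exists>c. \<forall>z\<in>V. H z = c)" if V: "open V" "V \<noteq> {}" "V \<subseteq> U" for V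
  proof
    assume "\<exists>c. \<forall>z\<in>V. H z = c"
    then obtain c where c: "\<And>z. z \<in> V \<Longrightarrow> H z = c" by blast
    obtain x0 y0 where z0: "(x0, y0) \<in> V" using V(2) by auto
    obtain e where e: "e > 0" "ball (x0, y0) e \<subseteq> V" using V(1) z0 openE by blast
    define p where "p = qN x0 ^ (2*k-1) - smult c (qD x0 ^ (2*k))"
    have p0: "p \<noteq> 0"
    proof
      assume "p = 0"
      then have eq: "qN x0 ^ (2*k-1) = smult c (qD x0 ^ (2*k))" unfolding p_def by simp
      have "degree (qN x0 ^ (2*k-1)) = (2*k-1)*2" using degree_power_eq[OF qN0] dqN by simp
      moreover have "degree (smult c (qD x0 ^ (2*k))) = (if c = 0 then 0 else 2*k*2)"
        using degree_power_eq[OF qD0] dqD by simp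
      ultimately show False using eq k by (simp split: if_splits)
    qed
    obtain y where y: "y0 - e < y" "y < y0 + e" "poly p y \<noteq> 0"
      using poly_nz_interval[OF p0, of "y0 - e" "y0 + e"] e(1) by auto
    have "(x0, y) \<in> ball (x0, y0) e" using y by (simp add: dist_Pair_Pair dist_real_def abs_less_iff)
    then have inV: "(x0, y) \<in> V" using e by auto
    then have "H (x0, y) = c" by (rule c)
    moreover have "Hden k r x0 y \<noteq> 0" using inV V(3) unfolding U_def by auto
    ultimately have "Hnum k r x0 y ^ (2*k-1) = c * Hden k r x0 y ^ (2*k)"
      unfolding H_def by (simp add: field_simps)
    then have "poly p y = 0" unfolding p_def qN_def qD_def
      by (simp add: Hnum_poly Hden_poly poly_power)
    then show False using y by simp
  qed
  have inv: "\<forall>s\<in>I. \<forall>t\<in>I. H (\<gamma> s) = H (\<gamma> t)"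
    if I: "is_interval I" and g: "\<forall>t\<in>I. \<gamma> t \<in> U \<and> (\<gamma> has_vector_derivative
          (\<lambda>(x, y). (- y + poly (r2p k r) x, y * poly (r4p k r) x)) (\<gamma> t)) (at t within I)"
    for \<gamma> :: "real \<Rightarrow> real \<times> real" and I
  proof -
    define X where "X t = fst (\<gamma> t)" for t
    define Y where "Y t = snd (\<gamma> t)" for t
    have "((\<lambda>s. Hnum k r (X s) (Y s) ^ (2*k-1) / Hden k r (X s) (Y s) ^ (2*k)) has_real_derivative 0) (at t within I)"
      if t: "t \<in> I" for t
    proof (rule dH[OF k])
      have gt: "\<gamma> t = (X t, Y t)" unfolding X_def Y_def by simp
      have vd: "(\<gamma> has_vector_derivative (- Y t + poly (r2p k r) (X t), Y t * poly (r4p k r) (X t))) (at t within I)"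
        using g t gt by auto
      show "(X has_real_derivative - Y t + poly (r2p k r) (X t)) (at t within I)"
        using vd_fst[OF vd] unfolding X_def[abs_def] by simp
      show "(Y has_real_derivative Y t * poly (r4p k r) (X t)) (at t within I)"
        using vd_snd[OF vd] unfolding Y_def[abs_def] by simp
      show "Hden k r (X t) (Y t) \<noteq> 0" using g t gt unfolding U_def by auto
    qed
    then obtain c where c: "\<forall>t\<in>I. Hnum k r (X t) (Y t) ^ (2*k-1) / Hden k r (X t) (Y t) ^ (2*k) = c"
      using has_field_derivative_zero_constant[OF is_interval_convex[OF I]] by blast
    have "H (\<gamma> t) = c" if "t \<in> I" for t
      using c that unfolding Heq X_def Y_def by auto
    then show ?thesis by auto
  qed
  show "first_integral (\<lambda>(x, y). (- y + poly (r2p k r) x, y * poly (r4p k r) x))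
             {(x, y). Hden k r x y \<noteq> 0}
             (\<lambda>(x, y). (Hnum k r x y) ^ (2*k - 1) / (Hden k r x y) ^ (2*k))"
    unfolding first_integral_def U_def[symmetric] H_def[symmetric]
  proof (intro conjI openU neU diffH allI impI)
    fix V assume "open V \<and> V \<noteq> {} \<and> V \<subseteq> U"
    then show "\<not> (\<exists>c. \<forall>z\<in>V. H z = c)" using nonconst by blast
  next
    fix \<gamma> :: "real \<Rightarrow> real \<times> real" and I
    assume "is_interval I \<and> (\<forall>t\<in>I. \<gamma> t \<in> U \<and> (\<gamma> has_vector_derivative
          (\<lambda>(x, y). (- y + poly (r2p k r) x, y * poly (r4p k r) x)) (\<gamma> t)) (at t within I))"
    then show "\<forall>s\<in>I. \<forall>t\<in>I. H (\<gamma> s) = H (\<gamma> t)" using inv by blast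
  qed
qed
end
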